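(* Fix $\gamma \in (\tfrac{2}{3},2)$ and let $x \in B_1^+(\mathrm{VI}_0) \setminus S_1^+(\mathrm{VI}_0)$. Then the solution through $x$ satisfies $$\lim_{\tau \to -\infty} \big(N_-^2 - N_+^2\big)(\tau) = 0.$$ In particular, $\alpha(x) \subset B(\mathrm{I}) \cup B_2^+(\mathrm{II}) \cup B_3^-(\mathrm{II})$.
   Context: Set $q^* := \tfrac{3\gamma-2}{2} \in (0,2)$. On $\mathbb{R}^5$ with coordinates $(\Sigma_+,\Sigma_-,N_+,N_-,\Omega)$ consider the system (with $' = d/d\tau$) $\Sigma_+' = -(2-q)\Sigma_+ - 2N_-^2$, $\Sigma_-' = -(2-q)\Sigma_- - 2\sqrt{3}N_+N_-$, $N_+' = (q+2\Sigma_+)N_+ + 2\sqrt{3}\Sigma_- N_-$, $N_-' = (q+2\Sigma_+)N_- + 2\sqrt{3}\Sigma_- N_+$, $\Omega' = 2(q-q^* )\Omega$, where $q := 2(\Sigma_+^2+\Sigma_-^2) + q^*\Omega$. The phase space $B_1^+(\mathrm{VI}_0)$ is the set of points satisfying $\Omega + \Sigma_+^2 + \Sigma_-^2 + N_-^2 = 1$, $\Omega \ge 0$ and $N_- > |N_+|$; it is invariant, solutions exist for all $\tau$, and $\varphi^\tau(x)$ denotes the flow; $(N_\pm)(\tau)$ means $N_\pm(\varphi^\tau(x))$. The $\alpha$-limit set $\alpha(x)$ is the set of all limits of $\varphi^{\tau_k}(x)$ with $\tau_k \to -\infty$. $S_1^+(\mathrm{VI}_0) := B_1^+(\mathrm{VI}_0)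 \cap \{\Sigma_- = 0, N_+ = 0\}$. Writing $\overline{B_1^+(\mathrm{VI}_0)}$ for the closure in $\mathbb{R}^5$: $B(\mathrm{I}) := \overline{B_1^+(\mathrm{VI}_0)} \cap \{N_+ = N_- = 0\}$, $B_2^+(\mathrm{II}) := \overline{B_1^+(\mathrm{VI}_0)} \cap \{N_- = N_+ \neq 0\}$, $B_3^-(\mathrm{II}) := \overline{B_1^+(\mathrm{VI}_0)} \cap \{N_- = -N_+ \neq 0\}$. *)

theory Defs
  imports "HOL-Analysis.Analysis"
begin

type_synonym state = "real \<times> real \<times> real \<times> real \<times> real"
  (* (Sigma_plus, Sigma_minus, N_plus, N_minus, Omega) *)

definition qstar :: "real \<Rightarrow> real" where
  "qstar \<gamma> = (3 * \<gamma> - 2) / 2"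

definition qfun :: "real \<Rightarrow> state \<Rightarrow> real" where
  "qfun \<gamma> p = (case p of (Sp, Sm, Np, Nm, Om) \<Rightarrow> 2 * (Sp^2 + Sm^2) + qstar \<gamma> * Om)"

definition VI0_field :: "real \<Rightarrow> state \<Rightarrow> state" where
  "VI0_field \<gamma> p = (case p of (Sp, Sm, Np, Nm, Om) \<Rightarrow>
     (let q = qfun \<gamma> p in
      ( - (2 - q) * Sp - 2 * Nm^2,
        - (2 - q) * Sm - 2 * sqrt 3 * Np * Nm,
        (q + 2 * Sp) * Np + 2 * sqrt 3 * Sm * Nm,
        (q + 2 * Sp) * Nm + 2 * sqrt 3 * Sm * Np,
        2 * (q - qstar \<gamma>) * Om)))"

definition B1plus_VI0 :: "state set" where
  "B1plus_VI0 = {(Sp, Sm, Np, Nm, Om). Om + Sp^2 + Sm^2 + Nm^2 = 1 \<and> Om \<ge> 0 \<and> Nm > \<bar>Np\<bar>}"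

definition S1plus_VI0 :: "state set" where
  "S1plus_VI0 = B1plus_VI0 \<inter> {(Sp, Sm, Np, Nm, Om). Sm = 0 \<and> Np = 0}"

definition B_I :: "state set" where
  "B_I = closure B1plus_VI0 \<inter> {(Sp, Sm, Np, Nm, Om). Np = 0 \<and> Nm = 0}"

definition B2plus_II :: "state set" where
  "B2plus_II = closure B1plus_VI0 \<inter> {(Sp, Sm, Np, Nm, Om). Nm = Np \<and> Np \<noteq> 0}"

definition B3minus_II :: "state set" where
  "B3minus_II = closure B1plus_VI0 \<inter> {(Sp, Sm, Np, Nm, Om). Nm = - Np \<and> Np \<noteq> 0}"

definition Nplus :: "state \<Rightarrow> real" where
  "Nplus p = fst (snd (snd p))"

definition Nminus :: "state \<Rightarrow> real" where
  "Nminus p = fst (snd (snd (snd p)))"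

definition alpha_limit :: "(real \<Rightarrow> 'a::topological_space) \<Rightarrow> 'a set" where
  "alpha_limit u = {y. \<exists>s :: nat \<Rightarrow> real. filterlim s at_bot sequentially \<and> (\<lambda>k. u (s k)) \<longlonglongrightarrow> y}"

end

theory Submission
  imports Defs
begin

lemma lin_ode:
  fixes h a :: "real \<Rightarrow> real"
  assumes ca: "continuous_on UNIV a" and dh: "\<And>t. (h has_real_derivative a t * h t) (at t)"
  shows "\<exists>c>0. h t = c * h 0"
proof -
  define R where "R = \<bar>t\<bar> + 1"
  define S where "S = {-R..R}"
  define A where "A = (\<lambda>x. integral {-R..x} a)"
  have dA: "(A has_real_derivative a x) (at x within S)" if "x \<in> S" for x
    unfolding A_def S_def by (rule integral_has_real_derivative) (use ca that S_def in \<open>auto intro: continuous_on_subset\<close>)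
  have "(((\<lambda>x. h x * exp (- A x))) has_real_derivative 0) (at x within S)" if "x \<in> S" for x
  proof -
    have "(((\<lambda>x. h x * exp (- A x))) has_real_derivative (a x * h x) * exp (- A x) + h x * (exp (- A x) * (- a x))) (at x within S)"
      using has_field_derivative_at_within[OF dh[of x], of S] dA[OF that]
      by (auto intro!: derivative_eq_intros)
    then show ?thesis by (simp add: algebra_simps)
  qed
  then obtain c where c: "\<forall>x\<in>S. h x * exp (- A x) = c"
    using has_field_derivative_zero_constant[of S] unfolding S_def by force
  have "t \<in> S" "0 \<in> S" unfolding S_def R_def by auto
  then have "h t * exp (- A t) = h 0 * exp (- A 0)" using c by auto
  then have "h t = exp (A t - A 0) * h 0"
    by (simp add: exp_diff field_simps exp_minus)
  then show ?thesis by (intro exI[of _ "exp (A t - A 0)"]) auto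
qed

lemma abs_mult_le: "\<bar>a\<bar> \<le> A \<Longrightarrow> \<bar>b\<bar> \<le> B \<Longrightarrow> \<bar>(a::real) * b\<bar> \<le> A * B"
  by (simp add: abs_mult mult_mono')

lemma lip_from_deriv:
  fixes f f' :: "real \<Rightarrow> real"
  assumes d: "\<And>t. (f has_real_derivative f' t) (at t)" and b: "\<And>t. \<bar>f' t\<bar> \<le> C"
  shows "\<bar>f a - f b\<bar> \<le> C * \<bar>a - b\<bar>"
proof -
  have *: "\<bar>f y - f x\<bar> \<le> C * (y - x)" if xy: "x < y" for x y
  proof -
    obtain z where "f y - f x = (y - x) * f' z" using MVT2[OF xy d] by blast
    then have "\<bar>f y - f x\<bar> = (y - x) * \<bar>f' z\<bar>" using xy by (simp add: abs_mult)
    also have "\<dots> \<le> (y - x) * C" using b[of z] xy by (intro mult_left_mono) auto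
    finally show ?thesis by (simp add: mult.commute)
  qed
  show ?thesis
  proof (cases a b rule: linorder_cases)
    case less then show ?thesis using *[OF less] by (simp add: abs_minus_commute)
  next
    case equal then show ?thesis by simp
  next
    case greater then show ?thesis using *[OF greater] by simp
  qed
qed

lemma barbalat1:
  fixes E E' f :: "real \<Rightarrow> real"
  assumes d: "\<And>t. (E has_real_derivative E' t) (at t)" and le: "\<And>t. E' t \<le> - f t"
    and f0: "\<And>t. f t \<ge> 0" and bnd: "\<And>t. t \<le> 0 \<Longrightarrow> E t \<le> K"
    and lip: "\<And>a b. \<bar>f a - f b\<bar> \<le> L * \<bar>a - b\<bar>" and L: "L > 0"
    and e: "\<epsilon> > 0"
  shows "\<exists>T. \<forall>t\<le>T. f t < \<epsilon>"
proof -
  have mono: "E b \<le> E a" if "a \<le> b" for a b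
    using DERIV_nonpos_imp_nonincreasing[OF that] d le f0
    by (metis neg_le_0_iff_le order_trans)
  define V where "V = E ` {..0}"
  have V: "V \<noteq> {}" "bdd_above V" using bnd unfolding V_def by (auto intro!: bdd_aboveI[of _ K])
  define S where "S = Sup V"
  define \<delta> where "\<delta> = \<epsilon> / (2 * L)"
  have dp: "\<delta> > 0" unfolding \<delta>_def using e L by auto
  define \<eta> where "\<eta> = \<epsilon> * \<delta> / 2"
  have "S - \<eta> < S" unfolding \<eta>_def using e dp by auto
  then obtain y where "y \<in> V" "S - \<eta> < y" using less_cSupD[OF V(1)] unfolding S_def by blast
  then obtain t1 where t1: "t1 \<le> 0" "S - \<eta> < E t1" unfolding V_def by auto
  have "f t < \<epsilon>" if t: "t \<le> t1 - \<delta>" for t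
  proof -
    have "t < t + \<delta>" using dp by simp
    from MVT2[OF this d] obtain z where z: "t < z" "z < t + \<delta>" "E (t + \<delta>) - E t = \<delta> * E' z"
      by auto
    have "E t \<le> S" unfolding S_def V_def using t t1 dp
      by (intro cSup_upper) (auto simp: V(2)[unfolded V_def])
    moreover have "E t1 \<le> E (t + \<delta>)" using mono t by auto
    ultimately have "\<delta> * E' z > - \<eta>" using z t1 by linarith
    moreover have "\<delta> * E' z \<le> \<delta> * (- f z)" using le[of z] dp by (intro mult_left_mono) auto
    ultimately have "\<delta> * f z < \<eta>" by linarith
    then have fz: "f z < \<epsilon> / 2" unfolding \<eta>_def using dp by (simp add: field_simps)
    have "\<bar>f t - f z\<bar> \<le> L * \<bar>t - z\<bar>" by (rule lip)
    also have "\<dots> \<le> L * \<delta>" using z L by (intro mult_left_mono) auto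
    also have "\<dots> = \<epsilon> / 2" unfolding \<delta>_def using L by simp
    finally show ?thesis using fz by linarith
  qed
  then show ?thesis by blast
qed

lemma barbalat2:
  fixes f g :: "real \<Rightarrow> real"
  assumes d: "\<And>t. (f has_real_derivative g t) (at t)"
    and lim: "\<And>\<epsilon>. \<epsilon> > 0 \<Longrightarrow> \<exists>T. \<forall>t\<le>T. \<bar>f t\<bar> < \<epsilon>"
    and lip: "\<And>a b. \<bar>g a - g b\<bar> \<le> L * \<bar>a - b\<bar>" and L: "L > 0"
    and e: "\<epsilon> > 0"
  shows "\<exists>T. \<forall>t\<le>T. \<bar>g t\<bar> < \<epsilon>"
proof -
  define \<delta> where "\<delta> = \<epsilon> / (2 * L)"
  have dp: "\<delta> > 0" unfolding \<delta>_def using e L by auto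
  obtain T0 where T0: "\<forall>t\<le>T0. \<bar>f t\<bar> < \<epsilon> * \<delta> / 4" using lim[of "\<epsilon> * \<delta> / 4"] e dp by auto
  have "\<bar>g t\<bar> < \<epsilon>" if t: "t \<le> T0 - \<delta>" for t
  proof -
    have "t < t + \<delta>" using dp by simp
    from MVT2[OF this d] obtain z where z: "t < z" "z < t + \<delta>" "f (t + \<delta>) - f t = \<delta> * g z"
      by auto
    have "\<bar>f (t + \<delta>)\<bar> < \<epsilon> * \<delta> / 4" "\<bar>f t\<bar> < \<epsilon> * \<delta> / 4" using T0 t dp by auto
    then have "\<bar>\<delta> * g z\<bar> < \<epsilon> * \<delta> / 2" using z(3) by linarith
    then have gz: "\<bar>g z\<bar> < \<epsilon> / 2" using dp by (simp add: abs_mult field_simps)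
    have "\<bar>g t - g z\<bar> \<le> L * \<bar>t - z\<bar>" by (rule lip)
    also have "\<dots> \<le> L * \<delta>" using z L by (intro mult_left_mono) auto
    also have "\<dots> = \<epsilon> / 2" unfolding \<delta>_def using L by simp
    finally show ?thesis using gz by linarith
  qed
  then show ?thesis by blast
qed

lemma core:
  fixes s m p n w :: "real \<Rightarrow> real" and qs :: real
  assumes qs: "0 < qs" "qs < 2"
  defines "Q \<equiv> \<lambda>t. 2 * (s t ^2 + m t^2) + qs * w t"
  assumes ds: "\<And>t. (s has_real_derivative (-(2 - Q t) * s t - 2 * n t ^2)) (at t)"
    and dm: "\<And>t. (m has_real_derivative (-(2 - Q t) * m t - 2 * sqrt 3 * p t * n t)) (at t)"
    and dp: "\<And>t. (p has_real_derivative ((Q t + 2 * s t) * p t + 2 * sqrt 3 * m t * n t)) (at t)"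
    and dn: "\<And>t. (n has_real_derivative ((Q t + 2 * s t) * n t + 2 * sqrt 3 * m t * p t)) (at t)"
    and dw: "\<And>t. (w has_real_derivative (2 * (Q t - qs) * w t)) (at t)"
    and i1: "w 0 + s 0 ^2 + m 0 ^2 + n 0 ^2 = 1" and i2: "w 0 \<ge> 0" and i3: "n 0 > \<bar>p 0\<bar>"
    and i4: "m 0 \<noteq> 0 \<or> p 0 \<noteq> 0"
  shows "\<forall>t. w t + s t ^2 + m t ^2 + n t ^2 = 1 \<and> w t \<ge> 0 \<and> n t > \<bar>p t\<bar>"
    "\<forall>\<epsilon>>0. \<exists>T. \<forall>t\<le>T. n t ^2 - p t ^2 < \<epsilon>"
proof -
  have cs: "isCont s t" "isCont m t" "isCont p t" "isCont n t" "isCont w t" for t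
    by (rule DERIV_isCont[OF ds] DERIV_isCont[OF dm] DERIV_isCont[OF dp] DERIV_isCont[OF dn] DERIV_isCont[OF dw])+
  have cQ: "isCont Q t" for t unfolding Q_def using cs by (auto intro!: continuous_intros)
  have G: "w t + s t ^2 + m t ^2 + n t ^2 = 1" for t
  proof -
    let ?h = "\<lambda>t. w t + s t ^2 + m t ^2 + n t ^2 - 1"
    have "(?h has_real_derivative (2 * Q t) * ?h t) (at t)" for t
      by (rule derivative_eq_intros ds dm dp dn dw | simp)+ (simp add: Q_def algebra_simps power2_eq_square)
    moreover have "continuous_on UNIV (\<lambda>t. 2 * Q t)" using cQ
      by (intro continuous_at_imp_continuous_on) (auto intro!: continuous_intros)
    ultimately obtain c where "?h t = c * ?h 0" using lin_ode by blast
    then show ?thesis using i1 by simp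
  qed
  have W: "w t \<ge> 0" for t
  proof -
    have "(w has_real_derivative (2 * (Q t - qs)) * w t) (at t)" for t using dw[of t] by simp
    moreover have "continuous_on UNIV (\<lambda>t. 2 * (Q t - qs))" using cQ
      by (intro continuous_at_imp_continuous_on) (auto intro!: continuous_intros)
    ultimately obtain c where "c > 0" "w t = c * w 0" using lin_ode by blast
    then show ?thesis using i2 by simp
  qed
  have NP: "n t + p t > 0" for t
  proof -
    have "((\<lambda>t. n t + p t) has_real_derivative (Q t + 2 * s t + 2 * sqrt 3 * m t) * (n t + p t)) (at t)" for t
      by (rule derivative_eq_intros dp dn | simp)+ (simp add: algebra_simps)
    moreover have "continuous_on UNIV (\<lambda>t. Q t + 2 * s t + 2 * sqrt 3 * m t)" using cQ cs
      by (intro continuous_at_imp_continuous_on) (auto intro!: continuous_intros)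
    ultimately obtain c where "c > 0" "n t + p t = c * (n 0 + p 0)" using lin_ode[of _ "\<lambda>t. n t + p t"] by blast
    then show ?thesis using i3 by simp
  qed
  have NM: "n t - p t > 0" for t
  proof -
    have "((\<lambda>t. n t - p t) has_real_derivative (Q t + 2 * s t - 2 * sqrt 3 * m t) * (n t - p t)) (at t)" for t
      by (rule derivative_eq_intros dp dn | simp)+ (simp add: algebra_simps)
    moreover have "continuous_on UNIV (\<lambda>t. Q t + 2 * s t - 2 * sqrt 3 * m t)" using cQ cs
      by (intro continuous_at_imp_continuous_on) (auto intro!: continuous_intros)
    ultimately obtain c where "c > 0" "n t - p t = c * (n 0 - p 0)" using lin_ode[of _ "\<lambda>t. n t - p t"] by blast
    then show ?thesis using i3 by simp
  qed
  have NA: "n t > \<bar>p t\<bar>" for t using NP[of t] NM[of t] by linarith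
  show "\<forall>t. w t + s t ^2 + m t ^2 + n t ^2 = 1 \<and> w t \<ge> 0 \<and> n t > \<bar>p t\<bar>"
    using G W NA by blast
  have sq1: "s t^2 + m t^2 + n t^2 \<le> 1" for t using G[of t] W[of t] by linarith
  have ab: "\<bar>s t\<bar> \<le> 1" "\<bar>m t\<bar> \<le> 1" "\<bar>n t\<bar> \<le> 1" "\<bar>p t\<bar> \<le> 1" "w t \<le> 1" "n t > 0" for t
  proof -
    have "s t ^2 \<le> 1" "m t^2 \<le> 1" "n t^2 \<le> 1" using sq1[of t] by (auto intro: add_nonneg_nonneg order_trans[rotated])
    then show "\<bar>s t\<bar> \<le> 1" "\<bar>m t\<bar> \<le> 1" "\<bar>n t\<bar> \<le> 1" by (simp_all add: abs_square_le_1)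
    then show "\<bar>p t\<bar> \<le> 1" "n t > 0" using NA[of t] by auto
    show "w t \<le> 1" using G[of t] by (smt (verit) zero_le_power2)
  qed
  have Qb: "0 \<le> Q t" "Q t \<le> 2" for t
  proof -
    have "qs * w t \<le> 2 * w t" using qs W[of t] by (intro mult_right_mono) auto
    then show "Q t \<le> 2" unfolding Q_def using G[of t] by (smt (verit) zero_le_power2)
    show "0 \<le> Q t" unfolding Q_def using qs W[of t] by auto
  qed
  have Dpos: "n t ^2 - p t ^2 > 0" for t
  proof -
    have "n t ^2 - p t ^2 = (n t + p t) * (n t - p t)" by (simp add: power2_eq_square algebra_simps)
    then show ?thesis using NP[of t] NM[of t] by simp
  qed
  have sp: "n t ^2 \<le> 2 * (1 + s t)" for t
  proof -
    have "(1 - s t) * (1 + s t) \<le> 2 * (1 + s t)" using ab(1)[of t] by (intro mult_right_mono) auto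
    moreover have "(1 - s t) * (1 + s t) = 1 - s t ^2" by (simp add: power2_eq_square algebra_simps)
    moreover have "m t ^2 \<ge> 0" by simp
    ultimately show ?thesis using sq1[of t] by linarith
  qed
  define E where "E = (\<lambda>t. (m t ^2 + n t ^2) / (n t ^2 - p t ^2))"
  define Ed where "Ed = (\<lambda>t. - 4 * (1 + s t) * m t ^2 / (n t ^2 - p t ^2))"
  have dE: "(E has_real_derivative Ed t) (at t)" for t
  proof -
    have Dn: "n t ^2 - p t ^2 \<noteq> 0" using Dpos[of t] by simp
    let ?Md = "-(2 - Q t) * m t - 2 * sqrt 3 * p t * n t"
    let ?Pd = "(Q t + 2 * s t) * p t + 2 * sqrt 3 * m t * n t"
    let ?Nd = "(Q t + 2 * s t) * n t + 2 * sqrt 3 * m t * p t"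
    have h1: "((\<lambda>t. m t ^2 + n t ^2) has_real_derivative 2 * m t * ?Md + 2 * n t * ?Nd) (at t)"
      by (rule derivative_eq_intros dm dn | simp)+
    have h2: "((\<lambda>t. n t ^2 - p t ^2) has_real_derivative 2 * n t * ?Nd - 2 * p t * ?Pd) (at t)"
      by (rule derivative_eq_intros dp dn | simp)+
    have h3: "((2 * m t * ?Md + 2 * n t * ?Nd) * (n t ^2 - p t ^2) - (m t ^2 + n t ^2) * (2 * n t * ?Nd - 2 * p t * ?Pd))
       / ((n t ^2 - p t ^2) * (n t ^2 - p t ^2)) = Ed t"
    proof -
      have num: "(2 * m t * ?Md + 2 * n t * ?Nd) * (n t ^2 - p t ^2) - (m t ^2 + n t ^2) * (2 * n t * ?Nd - 2 * p t * ?Pd)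
         = (- 4 * (1 + s t) * m t ^2) * (n t ^2 - p t ^2)"
        by (simp add: power2_eq_square algebra_simps)
      show ?thesis unfolding Ed_def num using Dn by simp
    qed
    show ?thesis unfolding E_def using DERIV_divide[OF h1 h2 Dn] h3 by simp
  qed
  have Edle: "Ed t \<le> - (2 * m t ^2)" for t
  proof -
    have d: "n t ^2 - p t ^2 > 0" by (rule Dpos)
    have "n t ^2 - p t ^2 \<le> 2 * (1 + s t)" using sp[of t] by (smt (verit) zero_le_power2)
    then have "m t ^2 * (n t ^2 - p t ^2) \<le> m t ^2 * (2 * (1 + s t))"
      by (intro mult_left_mono) auto
    then have "2 * m t ^2 * (n t ^2 - p t ^2) \<le> 4 * (1 + s t) * m t ^2" by (simp add: algebra_simps)
    then show ?thesis unfolding Ed_def using d by (simp add: field_simps)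
  qed
  have Emono: "E b \<le> E a" if "a \<le> b" for a b
  proof (rule DERIV_nonpos_imp_nonincreasing[OF that])
    fix x show "\<exists>y. DERIV E x :> y \<and> y \<le> 0"
      using dE[of x] Edle[of x] by (intro exI[of _ "Ed x"]) (auto intro: order_trans[of _ "- (2 * m x ^2)"])
  qed
  define E0 where "E0 = E 0"
  have E01: "E0 > 1"
  proof -
    have "m 0 ^2 + p 0 ^2 > 0" using i4 by (auto simp: add_pos_nonneg add_nonneg_pos)
    then have "m 0 ^2 + n 0 ^2 > n 0 ^2 - p 0 ^2" by linarith
    then show ?thesis unfolding E0_def E_def using Dpos[of 0] by simp
  qed
  have Elow: "(E0 - 1) * n t ^2 \<le> m t ^2 + E0 * p t ^2" if "t \<le> 0" for t
  proof -
    have "E0 \<le> E t" unfolding E0_def using Emono that by blast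
    then have "E0 * (n t ^2 - p t ^2) \<le> m t ^2 + n t ^2" unfolding E_def using Dpos[of t]
      by (simp add: field_simps)
    then show ?thesis by (simp add: algebra_simps)
  qed
  show "\<forall>\<epsilon>>0. \<exists>T. \<forall>t\<le>T. n t ^2 - p t ^2 < \<epsilon>"
  proof (cases "\<forall>K. \<exists>t\<le>0. K \<le> E t")
    case True
    show ?thesis
    proof (intro allI impI)
      fix \<epsilon> :: real assume e: "\<epsilon> > 0"
      obtain t0 where t0: "t0 \<le> 0" "2 / \<epsilon> \<le> E t0" using True by blast
      have "n t ^2 - p t ^2 < \<epsilon>" if "t \<le> t0" for t
      proof -
        have Et: "2 / \<epsilon> \<le> E t" using Emono[OF that] t0 by linarith
        have d: "n t ^2 - p t ^2 > 0" by (rule Dpos)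
        have "E t * (n t ^2 - p t ^2) = m t ^2 + n t ^2" unfolding E_def using d by simp
        also have "\<dots> \<le> 1" using sq1[of t] zero_le_power2[of "s t"] by linarith
        moreover have "2 / \<epsilon> * (n t ^2 - p t ^2) \<le> E t * (n t ^2 - p t ^2)"
          using Et d by (intro mult_right_mono) auto
        ultimately have "2 / \<epsilon> * (n t ^2 - p t ^2) \<le> 1" by linarith
        then show ?thesis using e d by (simp add: field_simps)
      qed
      then show "\<exists>T. \<forall>t\<le>T. n t ^2 - p t ^2 < \<epsilon>" by blast
    qed
  next
    case False
    then obtain K where K: "\<And>t. t \<le> 0 \<Longrightarrow> E t \<le> K" by (meson not_le order_less_imp_le)
    have s3: "sqrt 3 \<le> 2" using real_sqrt_le_mono[of 3 4] by simp
    have s3p: "sqrt 3 \<ge> 1" using real_sqrt_le_mono[of 1 3] by simp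
    define Sd where "Sd = (\<lambda>t. -(2 - Q t) * s t - 2 * n t ^2)"
    define Md where "Md = (\<lambda>t. -(2 - Q t) * m t - 2 * sqrt 3 * p t * n t)"
    define Pd where "Pd = (\<lambda>t. (Q t + 2 * s t) * p t + 2 * sqrt 3 * m t * n t)"
    define Nd where "Nd = (\<lambda>t. (Q t + 2 * s t) * n t + 2 * sqrt 3 * m t * p t)"
    define Wd where "Wd = (\<lambda>t. 2 * (Q t - qs) * w t)"
    have b2Q: "\<bar>2 - Q t\<bar> \<le> 2" "\<bar>Q t + 2 * s t\<bar> \<le> 4" "\<bar>Q t - qs\<bar> \<le> 2" for t
      using Qb[of t] ab(1)[of t] qs by auto
    have pr: "\<bar>p t * n t\<bar> \<le> 1" "\<bar>m t * n t\<bar> \<le> 1" "\<bar>m t * p t\<bar> \<le> 1" "\<bar>n t * n t\<bar> \<le> 1" for t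
      using abs_mult_le[OF ab(4) ab(3), of t t] abs_mult_le[OF ab(2) ab(3), of t t]
        abs_mult_le[OF ab(2) ab(4), of t t] abs_mult_le[OF ab(3) ab(3), of t t] by auto
    have s3a: "\<bar>2 * sqrt 3 * x\<bar> \<le> 4" if "\<bar>x\<bar> \<le> 1" for x
      using abs_mult_le[of "2 * sqrt 3" 4 x 1] that s3 by auto
    have bSd: "\<bar>Sd t\<bar> \<le> 4" for t
    proof -
      have "\<bar>(2 - Q t) * s t\<bar> \<le> 2 * 1" by (rule abs_mult_le) (use b2Q ab in auto)
      moreover have "Sd t = -((2 - Q t) * s t) - 2 * (n t * n t)" unfolding Sd_def by (simp add: power2_eq_square algebra_simps)
      moreover have "0 \<le> n t * n t" by simp
      ultimately show ?thesis using pr(4)[of t] by (smt (verit))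
    qed
    have bMd: "\<bar>Md t\<bar> \<le> 6" for t
    proof -
      have "\<bar>(2 - Q t) * m t\<bar> \<le> 2 * 1" by (rule abs_mult_le) (use b2Q ab in auto)
      moreover have "\<bar>2 * sqrt 3 * (p t * n t)\<bar> \<le> 4" by (rule s3a) (rule pr)
      moreover have "Md t = - ((2 - Q t) * m t) - 2 * sqrt 3 * (p t * n t)" unfolding Md_def by (simp add: algebra_simps)
      ultimately show ?thesis by (smt (verit))
    qed
    have bPd: "\<bar>Pd t\<bar> \<le> 8" for t
    proof -
      have "\<bar>(Q t + 2 * s t) * p t\<bar> \<le> 4 * 1" by (rule abs_mult_le) (use b2Q ab in auto)
      moreover have "\<bar>2 * sqrt 3 * (m t * n t)\<bar> \<le> 4" by (rule s3a) (rule pr)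
      moreover have "Pd t = (Q t + 2 * s t) * p t + 2 * sqrt 3 * (m t * n t)" unfolding Pd_def by (simp add: algebra_simps)
      ultimately show ?thesis by (smt (verit))
    qed
    have bNd: "\<bar>Nd t\<bar> \<le> 8" for t
    proof -
      have "\<bar>(Q t + 2 * s t) * n t\<bar> \<le> 4 * 1" by (rule abs_mult_le) (use b2Q ab in auto)
      moreover have "\<bar>2 * sqrt 3 * (m t * p t)\<bar> \<le> 4" by (rule s3a) (rule pr)
      moreover have "Nd t = (Q t + 2 * s t) * n t + 2 * sqrt 3 * (m t * p t)" unfolding Nd_def by (simp add: algebra_simps)
      ultimately show ?thesis by (smt (verit))
    qed
    have bWd: "\<bar>Wd t\<bar> \<le> 4" for t
    proof -
      have "\<bar>(Q t - qs) * w t\<bar> \<le> 2 * 1" by (rule abs_mult_le) (use b2Q ab W in auto)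
      moreover have "Wd t = 2 * ((Q t - qs) * w t)" unfolding Wd_def by (simp add: algebra_simps)
      ultimately show ?thesis by (smt (verit))
    qed
    define Qd where "Qd = (\<lambda>t. 2 * (2 * s t * Sd t + 2 * m t * Md t) + qs * Wd t)"
    have ds': "(s has_real_derivative Sd t) (at t)" for t unfolding Sd_def by (rule ds)
    have dm': "(m has_real_derivative Md t) (at t)" for t unfolding Md_def by (rule dm)
    have dp': "(p has_real_derivative Pd t) (at t)" for t unfolding Pd_def by (rule dp)
    have dn': "(n has_real_derivative Nd t) (at t)" for t unfolding Nd_def by (rule dn)
    have dw': "(w has_real_derivative Wd t) (at t)" for t unfolding Wd_def by (rule dw)
    have dQ: "(Q has_real_derivative Qd t) (at t)" for t
    proof -
      have "((\<lambda>t. 2 * (s t ^2 + m t ^2) + qs * w t) has_real_derivative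
          2 * (2 * s t * Sd t + 2 * m t * Md t) + qs * Wd t) (at t)"
        using ds'[of t] dm'[of t] dw'[of t]
        by (auto intro!: derivative_eq_intros simp del: Q_def)
      then show ?thesis unfolding Qd_def Q_def .
    qed
    have bQd: "\<bar>Qd t\<bar> \<le> 48" for t
    proof -
      have "\<bar>s t * Sd t\<bar> \<le> 1 * 4" by (rule abs_mult_le) (use ab bSd in auto)
      moreover have "\<bar>m t * Md t\<bar> \<le> 1 * 6" by (rule abs_mult_le) (use ab bMd in auto)
      moreover have "\<bar>qs * Wd t\<bar> \<le> 2 * 4" by (rule abs_mult_le) (use qs bWd in auto)
      moreover have "Qd t = 4 * (s t * Sd t) + 4 * (m t * Md t) + qs * Wd t" unfolding Qd_def by (simp add: algebra_simps)
      ultimately show ?thesis by (smt (verit))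
    qed
    define Mdd where "Mdd = (\<lambda>t. Qd t * m t - (2 - Q t) * Md t - 2 * sqrt 3 * (Pd t * n t + p t * Nd t))"
    have dMd: "(Md has_real_derivative Mdd t) (at t)" for t
    proof -
      have "((\<lambda>t. -(2 - Q t) * m t - 2 * sqrt 3 * p t * n t) has_real_derivative Mdd t) (at t)"
        unfolding Mdd_def
        using dQ[of t] dm'[of t] dp'[of t] dn'[of t]
        by (auto intro!: derivative_eq_intros simp: algebra_simps)
      then show ?thesis unfolding Md_def .
    qed
    have bMdd: "\<bar>Mdd t\<bar> \<le> 124" for t
    proof -
      have "\<bar>Qd t * m t\<bar> \<le> 48 * 1" by (rule abs_mult_le) (use ab bQd in auto)
      moreover have "\<bar>(2 - Q t) * Md t\<bar> \<le> 2 * 6" by (rule abs_mult_le) (use b2Q bMd in auto)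
      moreover have "\<bar>Pd t * n t\<bar> \<le> 8 * 1" by (rule abs_mult_le) (use ab bPd in auto)
      moreover have "\<bar>p t * Nd t\<bar> \<le> 1 * 8" by (rule abs_mult_le) (use ab bNd in auto)
      moreover have "\<bar>2 * sqrt 3 * (Pd t * n t + p t * Nd t)\<bar> \<le> 4 * 16"
        by (rule abs_mult_le) (use s3 calculation(3,4) in auto)
      moreover have "Mdd t = Qd t * m t - (2 - Q t) * Md t - 2 * sqrt 3 * (Pd t * n t + p t * Nd t)" unfolding Mdd_def by simp
      ultimately show ?thesis by (smt (verit))
    qed
    define f where "f = (\<lambda>t. 2 * m t ^2)"
    have df: "(f has_real_derivative 4 * (m t * Md t)) (at t)" for t
      unfolding f_def by (rule derivative_eq_intros dm' | simp)+
    have bdf: "\<bar>4 * (m t * Md t)\<bar> \<le> 24" for t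
    proof -
      have "\<bar>m t * Md t\<bar> \<le> 1 * 6" by (rule abs_mult_le[OF ab(2) bMd])
      moreover have "\<bar>4 * (m t * Md t)\<bar> = 4 * \<bar>m t * Md t\<bar>" by (simp only: abs_mult abs_numeral)
      ultimately show ?thesis by linarith
    qed
    have flip: "\<bar>f a - f b\<bar> \<le> 24 * \<bar>a - b\<bar>" for a b by (rule lip_from_deriv[OF df bdf])
    have mlim: "\<exists>T. \<forall>t\<le>T. \<bar>m t\<bar> < \<epsilon>" if e: "\<epsilon> > 0" for \<epsilon>
    proof -
      have "\<exists>T. \<forall>t\<le>T. f t < 2 * \<epsilon>^2"
        by (rule barbalat1[OF dE, of f K 24]) (use Edle K flip e in \<open>auto simp: f_def\<close>)
      then obtain T where T: "\<forall>t\<le>T. f t < 2 * \<epsilon>^2" by blast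
      have "\<bar>m t\<bar> < \<epsilon>" if "t \<le> T" for t
      proof -
        have "\<bar>m t\<bar> ^2 < \<epsilon> ^2" using T that unfolding f_def by simp
        then show ?thesis using e power_less_imp_less_base[of "\<bar>m t\<bar>" 2 \<epsilon>] by auto
      qed
      then show ?thesis by blast
    qed
    have lipMd: "\<bar>Md a - Md b\<bar> \<le> 124 * \<bar>a - b\<bar>" for a b by (rule lip_from_deriv[OF dMd bMdd])
    have Mdlim: "\<exists>T. \<forall>t\<le>T. \<bar>Md t\<bar> < \<epsilon>" if e: "\<epsilon> > 0" for \<epsilon>
      by (rule barbalat2[OF dm' mlim lipMd]) (use e in auto)
    have pb: "p t ^2 \<le> 2 * \<bar>m t\<bar> + \<bar>Md t\<bar>" for t
    proof -
      have e1: "2 * sqrt 3 * (p t * n t) = - ((2 - Q t) * m t) - Md t" unfolding Md_def by (simp add: algebra_simps)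
      have "\<bar>2 - Q t\<bar> * \<bar>m t\<bar> \<le> 2 * \<bar>m t\<bar>" by (rule mult_right_mono) (use b2Q in auto)
      then have "\<bar>(2 - Q t) * m t\<bar> \<le> 2 * \<bar>m t\<bar>" by (simp only: abs_mult)
      then have "\<bar>2 * sqrt 3 * (p t * n t)\<bar> \<le> 2 * \<bar>m t\<bar> + \<bar>Md t\<bar>" unfolding e1 by linarith
      moreover have "\<bar>p t * n t\<bar> \<le> \<bar>2 * sqrt 3 * (p t * n t)\<bar>"
      proof -
        have "1 * \<bar>p t * n t\<bar> \<le> (2 * sqrt 3) * \<bar>p t * n t\<bar>" by (rule mult_right_mono) (use s3p in linarith, simp)
        moreover have "\<bar>2 * sqrt 3 * (p t * n t)\<bar> = (2 * sqrt 3) * \<bar>p t * n t\<bar>" by (simp add: abs_mult)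
        ultimately show ?thesis by linarith
      qed
      moreover have "p t ^2 \<le> \<bar>p t * n t\<bar>"
      proof -
        have "\<bar>p t\<bar> * \<bar>p t\<bar> \<le> \<bar>p t\<bar> * n t" using NA[of t] by (intro mult_left_mono) auto
        moreover have "\<bar>p t * n t\<bar> = \<bar>p t\<bar> * n t" using ab(6)[of t] by (simp add: abs_mult)
        moreover have "p t ^2 = \<bar>p t\<bar> * \<bar>p t\<bar>" by (simp add: power2_eq_square)
        ultimately show ?thesis by linarith
      qed
      ultimately show ?thesis by linarith
    qed
    show ?thesis
    proof (intro allI impI)
      fix \<epsilon> :: real assume e: "\<epsilon> > 0"
      define \<eta> where "\<eta> = \<epsilon> * (E0 - 1) / (2 * (1 + 3 * E0))"
      have eta: "\<eta> > 0" unfolding \<eta>_def using e E01 by auto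
      obtain T1 where T1: "\<forall>t\<le>T1. \<bar>m t\<bar> < \<eta>" using mlim[OF eta] by blast
      obtain T2 where T2: "\<forall>t\<le>T2. \<bar>Md t\<bar> < \<eta>" using Mdlim[OF eta] by blast
      have "n t ^2 - p t ^2 < \<epsilon>" if t: "t \<le> min 0 (min T1 T2)" for t
      proof -
        have m1: "\<bar>m t\<bar> < \<eta>" "\<bar>Md t\<bar> < \<eta>" using T1 T2 t by auto
        have "\<bar>m t\<bar> * \<bar>m t\<bar> \<le> \<bar>m t\<bar> * 1" using ab(2)[of t] by (intro mult_left_mono) auto
        then have "m t ^2 \<le> \<bar>m t\<bar>" by (simp add: power2_eq_square abs_mult[symmetric])
        then have m2: "m t ^2 < \<eta>" using m1 by linarith
        have p2: "p t ^2 < 3 * \<eta>" using pb[of t] m1 by linarith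
        have "(E0 - 1) * n t ^2 \<le> m t ^2 + E0 * p t ^2" using Elow t by auto
        also have "\<dots> \<le> \<eta> + E0 * (3 * \<eta>)" using m2 p2 E01 by (intro add_mono mult_left_mono) auto
        also have "\<dots> = \<eta> * (1 + 3 * E0)" by (simp add: algebra_simps)
        also have "\<dots> = \<epsilon> * (E0 - 1) / 2"
        proof -
          have nz: "1 + 3 * E0 \<noteq> 0" using E01 by simp
          show ?thesis unfolding \<eta>_def using nz by (simp add: field_simps)
        qed
        finally have "(E0 - 1) * n t ^2 \<le> (E0 - 1) * (\<epsilon> / 2)" by (simp add: mult.commute)
        then have "n t ^2 \<le> \<epsilon> / 2" using E01 by simp
        then show ?thesis using e zero_le_power2[of "p t"] by linarith
      qed
      then show "\<exists>T. \<forall>t\<le>T. n t ^2 - p t ^2 < \<epsilon>" by blast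
    qed
  qed
qed

lemma tend_from_eps:
  fixes D :: "real \<Rightarrow> real"
  assumes "\<forall>\<epsilon>>0. \<exists>T. \<forall>t\<le>T. D t < \<epsilon>" "\<And>t. D t \<ge> 0"
  shows "(D \<longlongrightarrow> 0) at_bot"
proof (rule tendstoI)
  fix e :: real assume "e > 0"
  then obtain T where "\<forall>t\<le>T. D t < e" using assms(1) by blast
  then show "\<forall>\<^sub>F x in at_bot. dist (D x) 0 < e"
    unfolding eventually_at_bot_linorder using assms(2) by (auto intro!: exI[of _ T])
qed

lemma comps:
  fixes u :: "real \<Rightarrow> state"
  assumes d: "\<And>t. (u has_vector_derivative VI0_field g (u t)) (at t)"
    and ut: "\<And>t. u t = (s t, m t, p t, n t, w t)"
  defines "Q \<equiv> \<lambda>t. 2 * (s t ^2 + m t^2) + qstar g * w t"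
  shows "(s has_real_derivative (-(2 - Q t) * s t - 2 * n t ^2)) (at t)"
    "(m has_real_derivative (-(2 - Q t) * m t - 2 * sqrt 3 * p t * n t)) (at t)"
    "(p has_real_derivative ((Q t + 2 * s t) * p t + 2 * sqrt 3 * m t * n t)) (at t)"
    "(n has_real_derivative ((Q t + 2 * s t) * n t + 2 * sqrt 3 * m t * p t)) (at t)"
    "(w has_real_derivative (2 * (Q t - qstar g) * w t)) (at t)"
proof -
  have F: "VI0_field g (u t) = (-(2 - Q t) * s t - 2 * n t ^2, -(2 - Q t) * m t - 2 * sqrt 3 * p t * n t,
     (Q t + 2 * s t) * p t + 2 * sqrt 3 * m t * n t, (Q t + 2 * s t) * n t + 2 * sqrt 3 * m t * p t,
     2 * (Q t - qstar g) * w t)"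
    unfolding ut VI0_field_def qfun_def Q_def by (simp add: Let_def)
  have e: "s = (\<lambda>t. fst (u t))" "m = (\<lambda>t. fst (snd (u t)))" "p = (\<lambda>t. fst (snd (snd (u t))))"
     "n = (\<lambda>t. fst (snd (snd (snd (u t)))))" "w = (\<lambda>t. snd (snd (snd (snd (u t)))))"
    by (simp_all add: ut)
  show "(s has_real_derivative (-(2 - Q t) * s t - 2 * n t ^2)) (at t)"
    using bounded_linear.has_vector_derivative[OF bounded_linear_fst d[of t]] unfolding F
    by (simp add: has_real_derivative_iff_has_vector_derivative e)
  show "(m has_real_derivative (-(2 - Q t) * m t - 2 * sqrt 3 * p t * n t)) (at t)"
    using bounded_linear.has_vector_derivative[OF bounded_linear_fst bounded_linear.has_vector_derivative[OF bounded_linear_snd d[of t]]] unfolding F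
    by (simp add: has_real_derivative_iff_has_vector_derivative e)
  show "(p has_real_derivative ((Q t + 2 * s t) * p t + 2 * sqrt 3 * m t * n t)) (at t)"
    using bounded_linear.has_vector_derivative[OF bounded_linear_fst bounded_linear.has_vector_derivative[OF bounded_linear_snd bounded_linear.has_vector_derivative[OF bounded_linear_snd d[of t]]]] unfolding F
    by (simp add: has_real_derivative_iff_has_vector_derivative e)
  show "(n has_real_derivative ((Q t + 2 * s t) * n t + 2 * sqrt 3 * m t * p t)) (at t)"
    using bounded_linear.has_vector_derivative[OF bounded_linear_fst bounded_linear.has_vector_derivative[OF bounded_linear_snd bounded_linear.has_vector_derivative[OF bounded_linear_snd bounded_linear.has_vector_derivative[OF bounded_linear_snd d[of t]]]]] unfolding F
    by (simp add: has_real_derivative_iff_has_vector_derivative e)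
  show "(w has_real_derivative (2 * (Q t - qstar g) * w t)) (at t)"
    using bounded_linear.has_vector_derivative[OF bounded_linear_snd bounded_linear.has_vector_derivative[OF bounded_linear_snd bounded_linear.has_vector_derivative[OF bounded_linear_snd bounded_linear.has_vector_derivative[OF bounded_linear_snd d[of t]]]]] unfolding F
    by (simp add: has_real_derivative_iff_has_vector_derivative e)
qed

theorem mainTheorem4:
  fixes \<gamma> :: real and x :: state and u :: "real \<Rightarrow> state"
  assumes "2/3 < \<gamma>" and "\<gamma> < 2"
    and "x \<in> B1plus_VI0 - S1plus_VI0"
    and "\<And>t. (u has_vector_derivative VI0_field \<gamma> (u t)) (at t)"
    and "u 0 = x"
  shows "((\<lambda>\<tau>. (Nminus (u \<tau>))^2 - (Nplus (u \<tau>))^2) \<longlongrightarrow> 0) at_bot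
         \<and> alpha_limit u \<subseteq> B_I \<union> B2plus_II \<union> B3minus_II"
proof -
  define s where "s = (\<lambda>t. fst (u t))"
  define m where "m = (\<lambda>t. fst (snd (u t)))"
  define p where "p = (\<lambda>t. fst (snd (snd (u t))))"
  define n where "n = (\<lambda>t. fst (snd (snd (snd (u t)))))"
  define w where "w = (\<lambda>t. snd (snd (snd (snd (u t)))))"
  have ut: "u t = (s t, m t, p t, n t, w t)" for t unfolding s_def m_def p_def n_def w_def by simp
  have qs: "0 < qstar \<gamma>" "qstar \<gamma> < 2" unfolding qstar_def using assms(1,2) by auto
  note C = comps[OF assms(4) ut]
  have x: "x = (s 0, m 0, p 0, n 0, w 0)" using ut[of 0] assms(5) by simp
  have i: "w 0 + s 0 ^2 + m 0 ^2 + n 0 ^2 = 1" "w 0 \<ge> 0" "n 0 > \<bar>p 0\<bar>" "m 0 \<noteq> 0 \<or> p 0 \<noteq> 0"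
    using assms(3) unfolding x B1plus_VI0_def S1plus_VI0_def by auto
  note R = core[OF qs C i]
  have Nm: "Nminus (u t) = n t" "Nplus (u t) = p t" for t unfolding Nminus_def Nplus_def ut by simp_all
  have lim: "((\<lambda>\<tau>. (Nminus (u \<tau>))^2 - (Nplus (u \<tau>))^2) \<longlongrightarrow> 0) at_bot"
    unfolding Nm
  proof (rule tend_from_eps[OF R(2)])
    fix t
    have "\<bar>p t\<bar> < n t" using R(1) by blast
    then have "\<bar>p t\<bar> ^2 \<le> n t ^2" by (intro power_mono) auto
    then show "0 \<le> n t ^2 - p t ^2" by simp
  qed
  have inB: "u t \<in> B1plus_VI0" for t
  proof -
    have "w t + s t ^2 + m t ^2 + n t ^2 = 1 \<and> 0 \<le> w t \<and> \<bar>p t\<bar> < n t" using R(1) by blast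
    then show ?thesis by (simp add: ut B1plus_VI0_def)
  qed
  have "alpha_limit u \<subseteq> B_I \<union> B2plus_II \<union> B3minus_II"
  proof
    fix y assume "y \<in> alpha_limit u"
    then obtain sq :: "nat \<Rightarrow> real" where sq: "filterlim sq at_bot sequentially" "(\<lambda>k. u (sq k)) \<longlonglongrightarrow> y"
      unfolding alpha_limit_def by blast
    have cl: "y \<in> closure B1plus_VI0" unfolding closure_sequential
      by (rule exI[of _ "\<lambda>k. u (sq k)"]) (use inB sq(2) in simp)
    let ?g = "\<lambda>z::state. (Nminus z)^2 - (Nplus z)^2"
    have "(\<lambda>k. ?g (u (sq k))) \<longlonglongrightarrow> ?g y"
      unfolding Nminus_def Nplus_def using sq(2) by (intro tendsto_intros)
    moreover have "(\<lambda>k. ?g (u (sq k))) \<longlonglongrightarrow> 0"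
      using filterlim_compose[OF lim sq(1)] by (simp add: o_def)
    ultimately have "?g y = 0" using LIMSEQ_unique by blast
    then have "(Nminus y)^2 = (Nplus y)^2" by simp
    then have "Nminus y = Nplus y \<or> Nminus y = - Nplus y" by (simp add: power2_eq_iff)
    moreover obtain a b c d e where y: "y = (a, b, c, d, e)" by (cases y) auto
    ultimately have cd: "d = c \<or> d = - c" unfolding Nminus_def Nplus_def by simp
    show "y \<in> B_I \<union> B2plus_II \<union> B3minus_II"
    proof (cases "c = 0")
      case True
      then have "y \<in> B_I" using cd cl unfolding B_I_def y by auto
      then show ?thesis by blast
    next
      case False
      then have "y \<in> B2plus_II \<or> y \<in> B3minus_II" using cd cl unfolding B2plus_II_def B3minus_II_def y by auto
      then show ?thesis by blast
    qed
  qed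
  with lim show ?thesis by blast
qed

end
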